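(* Let $A\in\mathfrak{so}(q_1)^p$ and $B\in\mathfrak{so}(q_2)^p$ each have linearly independent components. Suppose each of them is a distinguished point for $SL(q_i,\mathbb R)\times SL(p,\mathbb R)$ (with $q_1$, $q_2$ respectively) and is $SL(p,\mathbb R)$-minimal. Then there exists $c>0$ such that the concatenation $C=A+_c(cB)\in\mathfrak{so}(q_1+q_2)^p$ is a distinguished point for $SL(q_1+q_2,\mathbb R)\times SL(p,\mathbb R)$ and is $SL(p,\mathbb R)$-minimal. Consequently $\mathbb R^{p+q_1+q_2}(C)$ with its standard inner product is a nilsoliton.
   Context: $\mathfrak{so}(q)$ denotes the real skew-symmetric $q\times q$ matrices, with inner product $\langle X,Y\rangle=\mathrm{tr}(XY^T)$. The group $GL(q,\mathbb R)\times GL(p,\mathbb R)$ acts on $\mathfrak{so}(q)^p$ by $(g,h)\cdot(C_1,\dots,C_p)=(C'_1,\dots,C'_p)$ with $C'_k=\sum_i h_{ki}\,gC_ig^T$. The Lie algebra action of $(X,Y)$ is $\big((X,Y)\cdot C\big)_k=XC_k+C_kX^T+\sum_iY_{ki}C_i$. Moment maps: $m_1(C)=-2\sum_iC_i^2$ and $m_2(C)=[\mathrm{tr}(C_iC_j^T)]_{ij}$. Their traceless parts $m_1^0$, $m_2^0$ are the $SL$ moment maps. $C$ is distinguished for $SL(q)\times SL(p)$ if $(m_1^0(C),m_2^0(C))\cdot C=rC$ for some $r\in\mathbb R$. $C$ is $SL(p)$-minimal if $m_2^0(C)=0$. Concatenation: for $A\in\mathfrak{so}(q_1)^p$ and $B\in\mathfrak{so}(q_2)^p$,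 $A+_cB\in\mathfrak{so}(q_1+q_2)^p$ has $k$-th component the block-diagonal matrix $\mathrm{diag}(A_k,B_k)$. For $C\in\mathfrak{so}(q)^p$ with linearly independent components, $\mathbb R^{p+q}(C)$ is the two-step nilpotent Lie algebra on $\mathbb R^{q+p}$ with $[e_i,e_j]=\sum_k(C_k)_{ij}e_{q+k}$ for $i,j\le q$ and all other brackets of basis vectors zero. Its standard inner product makes $\{e_i\}$ orthonormal. A nilsoliton is an inner product whose Ricci operator equals $\lambda\mathrm{Id}+D$ for some $\lambda\in\mathbb R$ and some symmetric derivation $D$. *)

theory Defs
  imports Main "HOL-Analysis.Analysis"
begin

text \<open>Matrices are functions nat => nat => real; an n x n matrix is one that
vanishes outside indices below n. A p-tuple of matrices is a function
nat => (matrix), with components indexed by k < p.\<close>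

type_synonym mat = "nat \<Rightarrow> nat \<Rightarrow> real"
type_synonym mtuple = "nat \<Rightarrow> mat"

definition so :: "nat \<Rightarrow> mat set" where
  "so q = {M. (\<forall>i j. M i j = - M j i) \<and> (\<forall>i j. \<not>(i < q \<and> j < q) \<longrightarrow> M i j = 0)}"

definition in_so_pow :: "nat \<Rightarrow> nat \<Rightarrow> mtuple \<Rightarrow> bool" where
  "in_so_pow q p C \<longleftrightarrow> (\<forall>k<p. C k \<in> so q) \<and> (\<forall>k. p \<le> k \<longrightarrow> C k = (\<lambda>i j. 0))"

definition lin_indep_comps :: "nat \<Rightarrow> mtuple \<Rightarrow> bool" where
  "lin_indep_comps p C \<longleftrightarrow>
     (\<forall>a :: nat \<Rightarrow> real. (\<forall>i j. (\<Sum>k<p. a k * C k i j) = 0) \<longrightarrow> (\<forall>k<p. a k = 0))"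

definition mmul :: "nat \<Rightarrow> mat \<Rightarrow> mat \<Rightarrow> mat" where
  "mmul n X Y = (\<lambda>i j. \<Sum>l<n. X i l * Y l j)"

definition mtrans :: "mat \<Rightarrow> mat" where
  "mtrans X = (\<lambda>i j. X j i)"

definition mtrace :: "nat \<Rightarrow> mat \<Rightarrow> real" where
  "mtrace n X = (\<Sum>i<n. X i i)"

definition ident :: "nat \<Rightarrow> mat" where
  "ident n = (\<lambda>i j. if i = j \<and> i < n then 1 else 0)"

definition m1 :: "nat \<Rightarrow> nat \<Rightarrow> mtuple \<Rightarrow> mat" where
  "m1 q p C = (\<lambda>a b. -2 * (\<Sum>i<p. mmul q (C i) (C i) a b))"

definition m2 :: "nat \<Rightarrow> nat \<Rightarrow> mtuple \<Rightarrow> mat" where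
  "m2 q p C = (\<lambda>i j. if i < p \<and> j < p then mtrace q (mmul q (C i) (mtrans (C j))) else 0)"

text \<open>Traceless parts (the SL moment maps).\<close>

definition traceless :: "nat \<Rightarrow> mat \<Rightarrow> mat" where
  "traceless n X = (\<lambda>i j. X i j - (mtrace n X / real n) * ident n i j)"

definition m1_0 :: "nat \<Rightarrow> nat \<Rightarrow> mtuple \<Rightarrow> mat" where
  "m1_0 q p C = traceless q (m1 q p C)"

definition m2_0 :: "nat \<Rightarrow> nat \<Rightarrow> mtuple \<Rightarrow> mat" where
  "m2_0 q p C = traceless p (m2 q p C)"

definition lie_act :: "nat \<Rightarrow> nat \<Rightarrow> mat \<Rightarrow> mat \<Rightarrow> mtuple \<Rightarrow> mtuple" where
  "lie_act q p X Y C = (\<lambda>k a b.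
      mmul q X (C k) a b + mmul q (C k) (mtrans X) a b + (\<Sum>i<p. Y k i * C i a b))"

definition distinguished :: "nat \<Rightarrow> nat \<Rightarrow> mtuple \<Rightarrow> bool" where
  "distinguished q p C \<longleftrightarrow>
     (\<exists>r::real. \<forall>k<p. \<forall>a<q. \<forall>b<q.
        lie_act q p (m1_0 q p C) (m2_0 q p C) C k a b = r * C k a b)"

definition SLp_minimal :: "nat \<Rightarrow> nat \<Rightarrow> mtuple \<Rightarrow> bool" where
  "SLp_minimal q p C \<longleftrightarrow> (\<forall>i<p. \<forall>j<p. m2_0 q p C i j = 0)"

definition concat_so :: "nat \<Rightarrow> mtuple \<Rightarrow> mtuple \<Rightarrow> mtuple" where
  "concat_so q1 A B = (\<lambda>k i j.
      if i < q1 \<and> j < q1 then A k i j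
      else if q1 \<le> i \<and> q1 \<le> j then B k (i - q1) (j - q1) else 0)"

definition scale_tuple :: "real \<Rightarrow> mtuple \<Rightarrow> mtuple" where
  "scale_tuple c B = (\<lambda>k i j. c * B k i j)"

text \<open>A Lie algebra on R^n with orthonormal basis e_0..e_{n-1} is given by structure
constants sc i j m = <[e_i,e_j], e_m>.  The two-step nilpotent algebra R^{p+q}(C):
[e_i,e_j] = sum_k (C_k)_ij e_{q+k} for i,j<q, all other brackets of basis vectors zero.\<close>

definition nil_sc :: "nat \<Rightarrow> nat \<Rightarrow> mtuple \<Rightarrow> nat \<Rightarrow> nat \<Rightarrow> nat \<Rightarrow> real" where
  "nil_sc q p C i j m =
     (if i < q \<and> j < q \<and> q \<le> m \<and> m < q + p then C (m - q) i j else 0)"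

text \<open>Ricci operator (matrix w.r.t. the orthonormal basis) of a nilpotent metric Lie algebra:
  <Ric X,Y> = -1/2 sum_{i,j} <[X,e_i],e_j><[Y,e_i],e_j> + 1/4 sum_{i,j} <[e_i,e_j],X><[e_i,e_j],Y>.\<close>

definition ricci_nil :: "nat \<Rightarrow> (nat \<Rightarrow> nat \<Rightarrow> nat \<Rightarrow> real) \<Rightarrow> mat" where
  "ricci_nil n sc = (\<lambda>a b.
      - (1/2) * (\<Sum>i<n. \<Sum>j<n. sc a i j * sc b i j)
      + (1/4) * (\<Sum>i<n. \<Sum>j<n. sc i j a * sc i j b))"

text \<open>D (matrix, D e_i = sum_a D a i e_a) is a derivation:
  D[e_i,e_j] = [D e_i, e_j] + [e_i, D e_j].\<close>

definition is_derivation :: "nat \<Rightarrow> (nat \<Rightarrow> nat \<Rightarrow> nat \<Rightarrow> real) \<Rightarrow> mat \<Rightarrow> bool" where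
  "is_derivation n sc D \<longleftrightarrow>
     (\<forall>i<n. \<forall>j<n. \<forall>t<n.
        (\<Sum>m<n. sc i j m * D t m) =
        (\<Sum>a<n. D a i * sc a j t) + (\<Sum>a<n. D a j * sc i a t))"

definition is_nilsoliton :: "nat \<Rightarrow> (nat \<Rightarrow> nat \<Rightarrow> nat \<Rightarrow> real) \<Rightarrow> bool" where
  "is_nilsoliton n sc \<longleftrightarrow>
     (\<exists>(lam::real) D. is_derivation n sc D \<and> (\<forall>a<n. \<forall>b<n. D a b = D b a) \<and>
        (\<forall>a<n. \<forall>b<n. ricci_nil n sc a b = lam * ident n a b + D a b))"

end

theory Submission imports Defs begin

lemma sum_split: fixes f :: "nat \<Rightarrow> real" shows "(\<Sum>l<q1+q2. f l) = (\<Sum>l<q1. f l) + (\<Sum>l<q2. f (q1+l))"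
  by (induction q2) auto

lemma ident_sum_l: "a < q \<Longrightarrow> (\<Sum>l<q. ident q a l * f l) = f a"
proof -
  assume "a < q"
  have "(\<Sum>l<q. ident q a l * f l) = (\<Sum>l<q. if l = a then f l else 0)"
    by (rule sum.cong) (auto simp: ident_def)
  then show ?thesis using \<open>a < q\<close> by simp
qed

lemma ident_sum_r: "b < q \<Longrightarrow> (\<Sum>l<q. f l * ident q b l) = f b"
  by (simp add: ident_def if_distrib cong: if_cong)

lemma lie_act_eq:
  assumes "SLp_minimal q p C" "k<p" "a<q" "b<q"
  shows "lie_act q p (m1_0 q p C) (m2_0 q p C) C k a b =
     mmul q (m1 q p C) (C k) a b + mmul q (C k) (mtrans (m1 q p C)) a b
     - 2 * (mtrace q (m1 q p C) / real q) * C k a b"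
proof -
  define M where "M = m1 q p C"
  define t where "t = mtrace q M / real q"
  have 1: "mmul q (m1_0 q p C) (C k) a b = mmul q M (C k) a b - t * C k a b"
  proof -
    have "mmul q (m1_0 q p C) (C k) a b = (\<Sum>l<q. M a l * C k l b - t * (ident q a l * C k l b))"
      unfolding mmul_def m1_0_def traceless_def M_def t_def by (simp add: algebra_simps)
    also have "\<dots> = mmul q M (C k) a b - t * (\<Sum>l<q. ident q a l * C k l b)"
      by (simp add: sum_subtractf sum_distrib_left mmul_def)
    finally show ?thesis using ident_sum_l[OF assms(3)] by simp
  qed
  have 2: "mmul q (C k) (mtrans (m1_0 q p C)) a b = mmul q (C k) (mtrans M) a b - t * C k a b"
  proof -
    have "mmul q (C k) (mtrans (m1_0 q p C)) a b = (\<Sum>l<q. C k a l * M b l - t * (C k a l * ident q b l))"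
      unfolding mmul_def mtrans_def m1_0_def traceless_def M_def t_def by (simp add: algebra_simps)
    also have "\<dots> = mmul q (C k) (mtrans M) a b - t * (\<Sum>l<q. C k a l * ident q b l)"
      by (simp add: sum_subtractf sum_distrib_left mmul_def mtrans_def)
    finally show ?thesis using ident_sum_r[OF assms(4)] by simp
  qed
  have 3: "(\<Sum>i<p. m2_0 q p C k i * C i a b) = 0"
    using assms(1,2) unfolding SLp_minimal_def by (intro sum.neutral) auto
  show ?thesis unfolding lie_act_def using 1 2 3 by (simp add: M_def t_def)
qed

definition anticomm :: "nat \<Rightarrow> nat \<Rightarrow> mtuple \<Rightarrow> real \<Rightarrow> bool" where
  "anticomm q p C \<rho> \<longleftrightarrow> (\<forall>k<p. \<forall>a<q. \<forall>b<q.
     mmul q (m1 q p C) (C k) a b + mmul q (C k) (mtrans (m1 q p C)) a b = \<rho> * C k a b)"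

lemma dist_to_ac:
  assumes "distinguished q p C" "SLp_minimal q p C"
  shows "\<exists>\<rho>. anticomm q p C \<rho>"
proof -
  obtain r where r: "\<forall>k<p. \<forall>a<q. \<forall>b<q.
        lie_act q p (m1_0 q p C) (m2_0 q p C) C k a b = r * C k a b"
    using assms(1) unfolding distinguished_def by blast
  define t where "t = mtrace q (m1 q p C) / real q"
  have "anticomm q p C (r + 2 * t)"
    unfolding anticomm_def
  proof (intro allI impI)
    fix k a b assume h: "k < p" "a < q" "b < q"
    show "mmul q (m1 q p C) (C k) a b + mmul q (C k) (mtrans (m1 q p C)) a b = (r + 2 * t) * C k a b"
      using r h lie_act_eq[OF assms(2) h] unfolding t_def by (auto simp: algebra_simps)
  qed
  then show ?thesis by blast
qed

lemma ac_to_dist: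
  assumes "anticomm q p C \<rho>" "SLp_minimal q p C"
  shows "distinguished q p C"
proof -
  define t where "t = mtrace q (m1 q p C) / real q"
  have "\<forall>k<p. \<forall>a<q. \<forall>b<q.
        lie_act q p (m1_0 q p C) (m2_0 q p C) C k a b = (\<rho> - 2 * t) * C k a b"
  proof (intro allI impI)
    fix k a b assume h: "k < p" "a < q" "b < q"
    show "lie_act q p (m1_0 q p C) (m2_0 q p C) C k a b = (\<rho> - 2 * t) * C k a b"
      using assms(1) h lie_act_eq[OF assms(2) h] unfolding t_def anticomm_def by (auto simp: algebra_simps)
  qed
  then show ?thesis unfolding distinguished_def by blast
qed

lemma min_iff:
  "SLp_minimal q p C \<longleftrightarrow> (\<exists>s. \<forall>i<p. \<forall>j<p. m2 q p C i j = s * ident p i j)"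
proof
  assume "SLp_minimal q p C"
  then show "\<exists>s. \<forall>i<p. \<forall>j<p. m2 q p C i j = s * ident p i j"
    unfolding SLp_minimal_def m2_0_def traceless_def by (intro exI[of _ "mtrace p (m2 q p C) / real p"]) auto
next
  assume "\<exists>s. \<forall>i<p. \<forall>j<p. m2 q p C i j = s * ident p i j"
  then obtain s where s: "\<forall>i<p. \<forall>j<p. m2 q p C i j = s * ident p i j" by blast
  have tr: "mtrace p (m2 q p C) = real p * s"
  proof -
    have "mtrace p (m2 q p C) = (\<Sum>i<p. s)" unfolding mtrace_def
      by (rule sum.cong) (auto simp: s ident_def)
    then show ?thesis by simp
  qed
  show "SLp_minimal q p C"
    unfolding SLp_minimal_def m2_0_def traceless_def
  proof (intro allI impI)
    fix i j assume "i < p" "j < p"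
    then show "m2 q p C i j - mtrace p (m2 q p C) / real p * ident p i j = 0"
      using s tr by auto
  qed
qed

lemma m1_alt:
  assumes skew: "\<And>k i j. k < p \<Longrightarrow> A k i j = - A k j i"
  shows "m1 q p A a l = 2 * (\<Sum>k<p. \<Sum>b<q. A k a b * A k l b)"
proof -
  have "m1 q p A a l = -2 * (\<Sum>k<p. \<Sum>b<q. A k a b * A k b l)"
    unfolding m1_def mmul_def by simp
  also have "\<dots> = 2 * (\<Sum>k<p. \<Sum>b<q. A k a b * A k l b)"
  proof -
    have "(\<Sum>k<p. \<Sum>b<q. A k a b * A k b l) = - (\<Sum>k<p. \<Sum>b<q. A k a b * A k l b)"
      by (simp add: sum_negf[symmetric]) (intro sum.cong refl, simp add: skew[of _ _ l])
    then show ?thesis by simp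
  qed
  finally show ?thesis .
qed

lemma swap4:
  fixes F :: "nat \<Rightarrow> nat \<Rightarrow> nat \<Rightarrow> nat \<Rightarrow> real"
  shows "(\<Sum>k<p. \<Sum>a<q. \<Sum>b<q. \<Sum>l<q. F k a b l) = (\<Sum>a<q. \<Sum>l<q. \<Sum>k<p. \<Sum>b<q. F k a b l)"
proof -
  have "(\<Sum>k<p. \<Sum>a<q. \<Sum>b<q. \<Sum>l<q. F k a b l) = (\<Sum>a<q. \<Sum>k<p. \<Sum>b<q. \<Sum>l<q. F k a b l)"
    by (rule sum.swap)
  also have "\<dots> = (\<Sum>a<q. \<Sum>k<p. \<Sum>l<q. \<Sum>b<q. F k a b l)"
    by (intro sum.cong refl sum.swap)
  also have "\<dots> = (\<Sum>a<q. \<Sum>l<q. \<Sum>k<p. \<Sum>b<q. F k a b l)"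
    by (intro sum.cong refl sum.swap)
  finally show ?thesis .
qed

lemma ac_pos:
  assumes so: "in_so_pow q p A" and li: "lin_indep_comps p A" and p: "0 < p"
    and ac: "anticomm q p A \<rho>"
  shows "\<rho> > 0"
proof -
  have skew: "\<And>k i j. k < p \<Longrightarrow> A k i j = - A k j i"
    using so unfolding in_so_pow_def so_def by blast
  have zero: "\<And>k i j. k < p \<Longrightarrow> \<not> (i < q \<and> j < q) \<Longrightarrow> A k i j = 0"
    using so unfolding in_so_pow_def so_def by blast
  define M where "M = m1 q p A"
  have Malt: "\<And>a l. M a l = 2 * (\<Sum>k<p. \<Sum>b<q. A k a b * A k l b)"
    unfolding M_def by (rule m1_alt[OF skew])
  have Msym: "\<And>a l. M a l = M l a"
    unfolding Malt by (simp add: mult.commute)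
  have Malt2: "\<And>b l. M b l = 2 * (\<Sum>k<p. \<Sum>a<q. A k a b * A k a l)"
    unfolding Malt by (intro arg_cong[where f="\<lambda>x. 2 * x"] sum.cong refl, metis skew mult_minus_left mult_minus_right minus_minus lessThan_iff)
  have Mh: "\<And>a l. (\<Sum>k<p. \<Sum>b<q. A k a b * A k l b) = M a l / 2" using Malt by simp
  have Mh2: "\<And>b l. (\<Sum>k<p. \<Sum>a<q. A k a b * A k a l) = M b l / 2" using Malt2 by simp
  obtain k0 i0 j0 where nz: "k0 < p" "i0 < q" "j0 < q" "A k0 i0 j0 \<noteq> 0"
  proof (rule ccontr)
    assume "\<not> thesis"
    then have allz: "\<And>k i j. k < p \<Longrightarrow> A k i j = 0"
      using that zero by (metis)
    have "\<forall>i j. (\<Sum>k<p. (\<lambda>_. 1::real) k * A k i j) = 0" using allz by simp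
    then have "\<forall>k<p. (\<lambda>_. 1::real) k = 0"
      using spec[OF li[unfolded lin_indep_comps_def], of "\<lambda>_. 1"] by blast
    then show False using p by auto
  qed
  define S where "S = (\<Sum>k<p. \<Sum>a<q. \<Sum>b<q. A k a b * A k a b)"
  have Spos: "S > 0"
  proof -
    have "A k0 i0 j0 * A k0 i0 j0 \<le> (\<Sum>b<q. A k0 i0 b * A k0 i0 b)"
      by (rule member_le_sum[of j0 "{..<q}" "\<lambda>b. A k0 i0 b * A k0 i0 b"]) (use nz in auto)
    also have "\<dots> \<le> (\<Sum>a<q. \<Sum>b<q. A k0 a b * A k0 a b)"
      by (rule member_le_sum[of i0 "{..<q}" "\<lambda>a. \<Sum>b<q. A k0 a b * A k0 a b"]) (use nz in \<open>auto intro!: sum_nonneg\<close>)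
    also have "\<dots> \<le> S" unfolding S_def
      by (rule member_le_sum[of k0 "{..<p}" "\<lambda>k. \<Sum>a<q. \<Sum>b<q. A k a b * A k a b"]) (use nz in \<open>auto intro!: sum_nonneg\<close>)
    finally show ?thesis using nz(4) by (smt (verit) not_real_square_gt_zero)
  qed
  define T where "T = (\<Sum>a<q. \<Sum>l<q. M a l * M a l)"
  have Tpos: "T > 0"
  proof -
    have "A k0 i0 j0 * A k0 i0 j0 \<le> (\<Sum>b<q. A k0 i0 b * A k0 i0 b)"
      by (rule member_le_sum[of j0 "{..<q}" "\<lambda>b. A k0 i0 b * A k0 i0 b"]) (use nz in auto)
    also have "\<dots> \<le> (\<Sum>k<p. \<Sum>b<q. A k i0 b * A k i0 b)"
      by (rule member_le_sum[of k0 "{..<p}" "\<lambda>k. \<Sum>b<q. A k i0 b * A k i0 b"]) (use nz in \<open>auto intro!: sum_nonneg\<close>)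
    finally have "M i0 i0 > 0" unfolding Malt using nz(4)
      by (smt (verit) not_real_square_gt_zero)
    then have "0 < M i0 i0 * M i0 i0" by simp
    also have "M i0 i0 * M i0 i0 \<le> (\<Sum>l<q. M i0 l * M i0 l)"
      by (rule member_le_sum[of i0 "{..<q}" "\<lambda>l. M i0 l * M i0 l"]) (use nz in auto)
    also have "\<dots> \<le> T" unfolding T_def
      by (rule member_le_sum[of i0 "{..<q}" "\<lambda>a. \<Sum>l<q. M a l * M a l"]) (use nz in \<open>auto intro!: sum_nonneg\<close>)
    finally show ?thesis .
  qed
  have T1: "(\<Sum>k<p. \<Sum>a<q. \<Sum>b<q. A k a b * mmul q M (A k) a b) = T / 2"
  proof -
    have "(\<Sum>k<p. \<Sum>a<q. \<Sum>b<q. A k a b * mmul q M (A k) a b)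
        = (\<Sum>k<p. \<Sum>a<q. \<Sum>b<q. \<Sum>l<q. M a l * (A k a b * A k l b))"
      unfolding mmul_def by (simp add: sum_distrib_left mult_ac)
    also have "\<dots> = (\<Sum>a<q. \<Sum>l<q. \<Sum>k<p. \<Sum>b<q. M a l * (A k a b * A k l b))"
      by (rule swap4)
    also have "\<dots> = (\<Sum>a<q. \<Sum>l<q. M a l * (M a l / 2))"
      by (simp only: sum_distrib_left[symmetric] Mh)
    finally show ?thesis unfolding T_def by (simp add: sum_divide_distrib)
  qed
  have T2: "(\<Sum>k<p. \<Sum>a<q. \<Sum>b<q. A k a b * mmul q (A k) (mtrans M) a b) = T / 2"
  proof -
    have "(\<Sum>k<p. \<Sum>a<q. \<Sum>b<q. A k a b * mmul q (A k) (mtrans M) a b)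
        = (\<Sum>k<p. \<Sum>b<q. \<Sum>a<q. \<Sum>l<q. M b l * (A k a b * A k a l))"
      unfolding mmul_def mtrans_def by (subst sum.swap) (simp add: sum_distrib_left mult_ac)
    also have "\<dots> = (\<Sum>b<q. \<Sum>l<q. \<Sum>k<p. \<Sum>a<q. M b l * (A k a b * A k a l))"
      by (rule swap4)
    also have "\<dots> = (\<Sum>b<q. \<Sum>l<q. M b l * (M b l / 2))"
      by (simp only: sum_distrib_left[symmetric] Mh2)
    finally show ?thesis unfolding T_def by (simp add: sum_divide_distrib)
  qed
  have "\<rho> * S = (\<Sum>k<p. \<Sum>a<q. \<Sum>b<q. A k a b * (\<rho> * A k a b))"
    unfolding S_def by (simp add: sum_distrib_left mult_ac)
  also have "\<dots> = (\<Sum>k<p. \<Sum>a<q. \<Sum>b<q. A k a b * mmul q M (A k) a b + A k a b * mmul q (A k) (mtrans M) a b)"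
    using ac unfolding anticomm_def M_def
    by (intro sum.cong refl) (simp add: distrib_left[symmetric] mult.left_commute[of \<rho>])
  also have "\<dots> = T" using T1 T2 by (simp add: sum.distrib)
  finally have "\<rho> * S = T" .
  then show ?thesis using Spos Tpos by (metis zero_less_mult_pos2 )
qed

lemma m1_sym:
  assumes skew: "\<And>k i j. k < p \<Longrightarrow> A k i j = - A k j i"
  shows "m1 q p A a b = m1 q p A b a"
  using m1_alt[OF skew, where a=a and l=b and q=q] m1_alt[OF skew, where a=b and l=a and q=q]
  by (simp add: mult.commute)

lemma nil_lemma:
  assumes skew: "\<And>k i j. k < p \<Longrightarrow> C k i j = - C k j i"
    and s: "\<forall>i<p. \<forall>j<p. m2 q p C i j = s * ident p i j"
    and ac: "anticomm q p C \<rho>"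
  shows "is_nilsoliton (q+p) (nil_sc q p C)"
proof -
  define n where "n = q + p"
  define sc where "sc = nil_sc q p C"
  define R where "R = ricci_nil n sc"
  define M where "M = m1 q p C"
  define lam where "lam = - (\<rho> + s) / 4"
  define D where "D = (\<lambda>a b. R a b - lam * ident n a b)"
  have Rsym: "\<And>a b. R a b = R b a" unfolding R_def ricci_nil_def by (simp add: mult.commute)
  have Msym: "\<And>a b. M a b = M b a" unfolding M_def by (rule m1_sym[OF skew])
  have Rmix1: "\<And>a b. a < q \<Longrightarrow> q \<le> b \<Longrightarrow> R a b = 0"
    unfolding R_def ricci_nil_def sc_def nil_sc_def by simp
  have Rmix2: "\<And>a b. q \<le> a \<Longrightarrow> b < q \<Longrightarrow> R a b = 0"
    unfolding R_def ricci_nil_def sc_def nil_sc_def by simp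
  have RUL: "\<And>a b. a < q \<Longrightarrow> b < q \<Longrightarrow> R a b = -(1/4) * M a b"
  proof -
    fix a b assume ab: "a < q" "b < q"
    have "R a b = -(1/2) * (\<Sum>i<q. \<Sum>k<p. C k a i * C k b i)"
      unfolding R_def ricci_nil_def sc_def nil_sc_def n_def using ab
      by (simp add: sum_split)
    also have "(\<Sum>i<q. \<Sum>k<p. C k a i * C k b i) = (\<Sum>k<p. \<Sum>i<q. C k a i * C k b i)"
      by (rule sum.swap)
    finally show "R a b = -(1/4) * M a b" unfolding M_def using m1_alt[OF skew, where a=a and l=b and q=q] by simp
  qed
  have RLR: "\<And>k l. k < p \<Longrightarrow> l < p \<Longrightarrow> R (q+k) (q+l) = (1/4) * m2 q p C k l"
    unfolding R_def ricci_nil_def sc_def nil_sc_def n_def m2_def mtrace_def mmul_def mtrans_def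
    by (simp add: sum_split)
  have DUL: "\<And>a b. a < q \<Longrightarrow> b < q \<Longrightarrow> D a b = -(1/4) * M a b - (if a = b then lam else 0)"
    unfolding D_def using RUL by (auto simp: ident_def n_def)
  have Dmix1: "\<And>a b. a < q \<Longrightarrow> q \<le> b \<Longrightarrow> D a b = 0"
    unfolding D_def using Rmix1 by (auto simp: ident_def)
  have Dmix2: "\<And>a b. q \<le> a \<Longrightarrow> b < q \<Longrightarrow> D a b = 0"
    unfolding D_def using Rmix2 by (auto simp: ident_def)
  have DLR: "\<And>k l. k < p \<Longrightarrow> l < p \<Longrightarrow> D (q+k) (q+l) = (if k = l then s/4 - lam else 0)"
  proof -
    fix k l assume kl: "k < p" "l < p"
    have "R (q+k) (q+l) = 1/4 * (s * ident p k l)" using RLR[OF kl] s kl by simp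
    then show "D (q+k) (q+l) = (if k = l then s/4 - lam else 0)"
      unfolding D_def using kl by (cases "k = l") (simp_all add: ident_def n_def)
  qed
  have "is_derivation n sc D"
    unfolding is_derivation_def
  proof (intro allI impI)
    fix i j t assume ijt: "i < n" "j < n" "t < n"
    show "(\<Sum>m<n. sc i j m * D t m) = (\<Sum>a<n. D a i * sc a j t) + (\<Sum>a<n. D a j * sc i a t)"
    proof (cases "t < q")
      case True
      have 1: "(\<Sum>m<n. sc i j m * D t m) = 0"
        by (intro sum.neutral ballI) (use \<open>t < q\<close> in \<open>auto simp: sc_def nil_sc_def Dmix1\<close>)
      have 2: "(\<Sum>a<n. D a i * sc a j t) = 0"
        by (intro sum.neutral ballI) (use \<open>t < q\<close> in \<open>auto simp: sc_def nil_sc_def\<close>)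
      have 3: "(\<Sum>a<n. D a j * sc i a t) = 0"
        by (intro sum.neutral ballI) (use \<open>t < q\<close> in \<open>auto simp: sc_def nil_sc_def\<close>)
      show ?thesis using 1 2 3 by simp
    next
      case False
      then obtain l where tl: "t = q + l" "l < p" using ijt(3) unfolding n_def
        by (metis add_less_cancel_left le_add_diff_inverse not_less)
      show ?thesis
      proof (cases "i < q \<and> j < q")
        case False
        note nij = \<open>\<not> (i < q \<and> j < q)\<close>
        have 1: "(\<Sum>m<n. sc i j m * D t m) = 0"
          by (intro sum.neutral ballI) (use nij in \<open>auto simp: sc_def nil_sc_def\<close>)
        have 2: "(\<Sum>a<n. D a i * sc a j t) = 0"
          apply (intro sum.neutral ballI)
          subgoal for a using nij Dmix1[of a i] by (auto simp: sc_def nil_sc_def)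
          done
        have 3: "(\<Sum>a<n. D a j * sc i a t) = 0"
          apply (intro sum.neutral ballI)
          subgoal for a using nij Dmix1[of a j] by (auto simp: sc_def nil_sc_def)
          done
        show ?thesis using 1 2 3 by simp
      next
        case True
        note ij = \<open>i < q \<and> j < q\<close>
        have L: "(\<Sum>m<n. sc i j m * D t m) = (s/4 - lam) * C l i j"
        proof -
          have "(\<Sum>m<n. sc i j m * D t m) = (\<Sum>k<p. C k i j * D (q+l) (q+k))"
            unfolding n_def sum_split using ij tl by (simp add: sc_def nil_sc_def)
          also have "\<dots> = (\<Sum>k<p. if k = l then (s/4 - lam) * C l i j else 0)"
            by (rule sum.cong) (auto simp: DLR tl)
          finally show ?thesis using tl by simp
        qed
        have R1: "(\<Sum>a<n. D a i * sc a j t) = -(1/4) * mmul q M (C l) i j - lam * C l i j"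
        proof -
          have "(\<Sum>a<n. D a i * sc a j t) = (\<Sum>a<q. D a i * C l a j)"
            unfolding n_def sum_split using ij tl by (simp add: sc_def nil_sc_def)
          also have "\<dots> = (\<Sum>a<q. -(1/4) * (M i a * C l a j) - (if a = i then lam * C l i j else 0))"
            by (rule sum.cong) (use ij in \<open>auto simp: DUL Msym[of _ i] algebra_simps\<close>)
          also have "\<dots> = -(1/4) * mmul q M (C l) i j - lam * C l i j"
            using ij by (simp add: sum_subtractf sum_distrib_left mmul_def)
          finally show ?thesis .
        qed
        have R2: "(\<Sum>a<n. D a j * sc i a t) = -(1/4) * mmul q (C l) (mtrans M) i j - lam * C l i j"
        proof -
          have "(\<Sum>a<n. D a j * sc i a t) = (\<Sum>a<q. D a j * C l i a)"
            unfolding n_def sum_split using ij tl by (simp add: sc_def nil_sc_def)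
          also have "\<dots> = (\<Sum>a<q. -(1/4) * (C l i a * M j a) - (if a = j then lam * C l i j else 0))"
            by (rule sum.cong) (use ij in \<open>auto simp: DUL Msym[of _ j] algebra_simps\<close>)
          also have "\<dots> = -(1/4) * mmul q (C l) (mtrans M) i j - lam * C l i j"
            using ij by (simp add: sum_subtractf sum_distrib_left mmul_def mtrans_def)
          finally show ?thesis .
        qed
        have AC: "mmul q M (C l) i j + mmul q (C l) (mtrans M) i j = \<rho> * C l i j"
          using ac ij tl unfolding anticomm_def M_def by blast
        have E: "(s/4 - lam) * C l i j = (-(1/4) * mmul q M (C l) i j - lam * C l i j) + (-(1/4) * mmul q (C l) (mtrans M) i j - lam * C l i j)"
          unfolding lam_def using AC by (simp add: field_simps)
        show ?thesis unfolding L R1 R2 by (rule E)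
      qed
    qed
  qed
  moreover have "\<forall>a<n. \<forall>b<n. D a b = D b a"
    unfolding D_def using Rsym by (auto simp: ident_def)
  moreover have "\<forall>a<n. \<forall>b<n. ricci_nil n sc a b = lam * ident n a b + D a b"
    unfolding D_def R_def by simp
  ultimately show ?thesis unfolding is_nilsoliton_def n_def sc_def by blast
qed

lemma concat_m1:
  "m1 (q1+q2) p (concat_so q1 A (scale_tuple c B)) a b =
    (if a < q1 \<and> b < q1 then m1 q1 p A a b
     else if q1 \<le> a \<and> q1 \<le> b then c^2 * m1 q2 p B (a-q1) (b-q1) else 0)"
  unfolding m1_def mmul_def concat_so_def scale_tuple_def
  by (auto simp: sum_split sum_distrib_left power2_eq_square mult_ac sum_negf)

lemma concat_m2:
  assumes "i < p" "j < p"
  shows "m2 (q1+q2) p (concat_so q1 A (scale_tuple c B)) i j = m2 q1 p A i j + c^2 * m2 q2 p B i j"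
  using assms unfolding m2_def mtrace_def mmul_def mtrans_def concat_so_def scale_tuple_def
  by (simp add: sum_split sum_distrib_left power2_eq_square mult_ac)

lemma concat_ac:
  assumes acA: "anticomm q1 p A \<rho>" and acB: "anticomm q2 p B \<rho>B" and c: "c^2 * \<rho>B = \<rho>"
  shows "anticomm (q1+q2) p (concat_so q1 A (scale_tuple c B)) \<rho>"
  unfolding anticomm_def
proof (intro allI impI)
  fix k a b assume h: "k < p" "a < q1 + q2" "b < q1 + q2"
  define C where "C = concat_so q1 A (scale_tuple c B)"
  define M where "M = m1 (q1+q2) p C"
  have MA: "\<And>a b. a < q1 \<Longrightarrow> b < q1 \<Longrightarrow> M a b = m1 q1 p A a b"
    unfolding M_def C_def concat_m1 by simp
  have MB: "\<And>a b. M (q1+a) (q1+b) = c^2 * m1 q2 p B a b"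
    unfolding M_def C_def concat_m1 by simp
  have Mx1: "\<And>a b. a < q1 \<Longrightarrow> q1 \<le> b \<Longrightarrow> M a b = 0"
    unfolding M_def C_def concat_m1 by simp
  have Mx2: "\<And>a b. q1 \<le> a \<Longrightarrow> b < q1 \<Longrightarrow> M a b = 0"
    unfolding M_def C_def concat_m1 by simp
  have key: "mmul (q1+q2) M (C k) a b + mmul (q1+q2) (C k) (mtrans M) a b = \<rho> * C k a b"
  proof (cases "a < q1")
    case aT: True
    show ?thesis
    proof (cases "b < q1")
      case True
      have "mmul (q1+q2) M (C k) a b + mmul (q1+q2) (C k) (mtrans M) a b
          = mmul q1 (m1 q1 p A) (A k) a b + mmul q1 (A k) (mtrans (m1 q1 p A)) a b"
        unfolding mmul_def mtrans_def sum_split using aT True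
        by (simp add: MA Mx1 C_def concat_so_def)
      also have "\<dots> = \<rho> * A k a b" using acA h aT True unfolding anticomm_def by blast
      finally show ?thesis using aT True by (simp add: C_def concat_so_def)
    next
      case False
      have "mmul (q1+q2) M (C k) a b + mmul (q1+q2) (C k) (mtrans M) a b = 0"
        unfolding mmul_def mtrans_def sum_split using aT False
        by (simp add: Mx1 Mx2 C_def concat_so_def)
      then show ?thesis using aT False by (simp add: C_def concat_so_def)
    qed
  next
    case aF: False
    then obtain a' where a': "a = q1 + a'" "a' < q2" using h(2)
      by (metis add_less_cancel_left le_add_diff_inverse not_less)
    show ?thesis
    proof (cases "b < q1")
      case True
      have "mmul (q1+q2) M (C k) a b + mmul (q1+q2) (C k) (mtrans M) a b = 0"
        unfolding mmul_def mtrans_def sum_split using a' True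
        by (simp add: Mx1 Mx2 C_def concat_so_def)
      then show ?thesis using a' True by (simp add: C_def concat_so_def)
    next
      case False
      then obtain b' where b': "b = q1 + b'" "b' < q2" using h(3)
        by (metis add_less_cancel_left le_add_diff_inverse not_less)
      have "mmul (q1+q2) M (C k) a b + mmul (q1+q2) (C k) (mtrans M) a b
          = c^3 * (mmul q2 (m1 q2 p B) (B k) a' b' + mmul q2 (B k) (mtrans (m1 q2 p B)) a' b')"
        unfolding mmul_def mtrans_def sum_split using a' b'
        by (simp add: MB Mx2 C_def concat_so_def scale_tuple_def sum_distrib_left distrib_left
             power2_eq_square power3_eq_cube mult_ac)
      also have "\<dots> = c^3 * (\<rho>B * B k a' b')" using acB h a' b' unfolding anticomm_def by simp
      also have "\<dots> = \<rho> * C k a b" using a' b' c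
        by (simp add: C_def concat_so_def scale_tuple_def power2_eq_square power3_eq_cube mult_ac)
      finally show ?thesis .
    qed
  qed
  then show "mmul (q1+q2) (m1 (q1+q2) p (concat_so q1 A (scale_tuple c B))) (concat_so q1 A (scale_tuple c B) k) a b + mmul (q1+q2) (concat_so q1 A (scale_tuple c B) k) (mtrans (m1 (q1+q2) p (concat_so q1 A (scale_tuple c B)))) a b = \<rho> * concat_so q1 A (scale_tuple c B) k a b"
    unfolding M_def C_def .
qed

theorem mainTheorem2:
  fixes p q1 q2 :: nat and A B :: mtuple
  assumes "in_so_pow q1 p A" and "in_so_pow q2 p B"
    and "lin_indep_comps p A" and "lin_indep_comps p B"
    and "distinguished q1 p A" and "distinguished q2 p B"
    and "SLp_minimal q1 p A" and "SLp_minimal q2 p B"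
  shows "\<exists>c::real. c > 0 \<and>
           distinguished (q1 + q2) p (concat_so q1 A (scale_tuple c B)) \<and>
           SLp_minimal (q1 + q2) p (concat_so q1 A (scale_tuple c B)) \<and>
           is_nilsoliton (q1 + q2 + p) (nil_sc (q1 + q2) p (concat_so q1 A (scale_tuple c B)))"
proof -
  have skA: "\<And>k i j. k < p \<Longrightarrow> A k i j = - A k j i"
    using assms(1) unfolding in_so_pow_def so_def by blast
  have skB: "\<And>k i j. k < p \<Longrightarrow> B k i j = - B k j i"
    using assms(2) unfolding in_so_pow_def so_def by blast
  obtain \<rho>A \<rho>B where acA: "anticomm q1 p A \<rho>A" and acB: "anticomm q2 p B \<rho>B"
    and pA: "\<rho>A > 0" and pB: "\<rho>B > 0"
  proof (cases "p = 0")
    case True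
    then show ?thesis using that[of 1 1] unfolding anticomm_def by simp
  next
    case False
    obtain \<rho>A where a: "anticomm q1 p A \<rho>A" using dist_to_ac[OF assms(5,7)] by blast
    obtain \<rho>B where b: "anticomm q2 p B \<rho>B" using dist_to_ac[OF assms(6,8)] by blast
    show ?thesis using that[OF a b ac_pos[OF assms(1,3) _ a] ac_pos[OF assms(2,4) _ b]] False by simp
  qed
  define c where "c = sqrt (\<rho>A / \<rho>B)"
  have cpos: "c > 0" unfolding c_def using pA pB by simp
  have c2: "c^2 * \<rho>B = \<rho>A" unfolding c_def using pA pB by simp
  define C where "C = concat_so q1 A (scale_tuple c B)"
  have acC: "anticomm (q1+q2) p C \<rho>A" unfolding C_def by (rule concat_ac[OF acA acB c2])
  obtain sA where sA: "\<forall>i<p. \<forall>j<p. m2 q1 p A i j = sA * ident p i j" using assms(7) min_iff by blast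
  obtain sB where sB: "\<forall>i<p. \<forall>j<p. m2 q2 p B i j = sB * ident p i j" using assms(8) min_iff by blast
  have sC: "\<forall>i<p. \<forall>j<p. m2 (q1+q2) p C i j = (sA + c^2 * sB) * ident p i j"
    unfolding C_def using sA sB concat_m2 by (simp add: algebra_simps)
  have minC: "SLp_minimal (q1+q2) p C" using sC min_iff by blast
  have skC: "\<And>k i j. k < p \<Longrightarrow> C k i j = - C k j i"
  proof -
    fix k i j assume "k < p"
    then show "C k i j = - C k j i"
      unfolding C_def concat_so_def scale_tuple_def
      using skA[of k i j] skB[of k "i-q1" "j-q1"] by auto
  qed
  have "distinguished (q1+q2) p C" by (rule ac_to_dist[OF acC minC])
  moreover have "is_nilsoliton (q1 + q2 + p) (nil_sc (q1 + q2) p C)"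
    by (rule nil_lemma[OF skC sC acC])
  ultimately show ?thesis using cpos minC unfolding C_def by blast
qed

end
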